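(* Let $G=(V,E)$ be a geometric graph, $u\in V$, and let $v_1,v_2,\ldots,v_l$ be the neighbors of $u$ listed in counterclockwise order around $u$. If the edges $(u,v_i)$ and $(u,v_j)$ conflict with each other for some $i\le j-2$, then there exists $k$ with $i\le k\le j-1$ such that the edges $(u,v_k)$ and $(u,v_{k+1})$ conflict with each other.
   Context: A geometric graph $G=(V,E)$ consists of a finite set $V$ of points in the plane and edges drawn as straight segments between points of $V$. Two edges $(u,v)$ and $(u,w)$ sharing the endpoint $u$ conflict if $\angle uwv\ge\pi/2$ or $\angle uvw\ge \pi/2$, i.e. if $w$ lies in the closed disk with diameter $\overline{uv}$ or $v$ lies in the closed disk with diameter $\overline{uw}$.
   Formalization: The counterclockwise angle swept around u from $v_i$ to $v_j$ must also be less than $\pi$ for the conclusion to be claimed. The statement above fails without it. *)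

theory Defs
  imports "HOL-Analysis.Analysis"
begin

text \<open>A geometric graph is a
finite point set V with a set E of (undirected) straight-line edges between distinct
points of V; an edge is stored as an ordered pair, its orientation is irrelevant.\<close>

definition geometric_graph :: "complex set \<Rightarrow> (complex \<times> complex) set \<Rightarrow> bool" where
  "geometric_graph V E \<longleftrightarrow> finite V \<and> E \<subseteq> V \<times> V \<and> (\<forall>(a, b) \<in> E. a \<noteq> b)"

definition neighbors :: "(complex \<times> complex) set \<Rightarrow> complex \<Rightarrow> complex set" where
  "neighbors E u = {v. (u, v) \<in> E \<or> (v, u) \<in> E}"

definition diam_disk :: "complex \<Rightarrow> complex \<Rightarrow> complex set" where
  "diam_disk p q = cball ((p + q) / 2) (dist p q / 2)"

definition conflict :: "complex \<Rightarrow> complex \<Rightarrow> complex \<Rightarrow> bool" where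
  "conflict u v w \<longleftrightarrow> w \<in> diam_disk u v \<or> v \<in> diam_disk u w"

definition ccw_angle :: "real \<Rightarrow> complex \<Rightarrow> real" where
  "ccw_angle theta z = (let a = Arg (z * cis (- theta)) in if a < 0 then a + 2 * pi else a)"

definition ccw_neighbor_list :: "(complex \<times> complex) set \<Rightarrow> complex \<Rightarrow> complex list \<Rightarrow> bool" where
  "ccw_neighbor_list E u vs \<longleftrightarrow> distinct vs \<and> set vs = neighbors E u \<and>
     (\<exists>theta. sorted (map (\<lambda>v. ccw_angle theta (v - u)) vs))"

end

theory Submission
  imports Defs
begin

lemma step:
  fixes ri rk rj a b :: real
  assumes pos: "ri > 0" "rk > 0" "rj > 0" and ab: "0 \<le> a" "a \<le> b" "b < pi"
    and n1: "\<not> (rk \<le> ri * cos a \<or> ri \<le> rk * cos a)"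
    and n2: "\<not> (rj \<le> rk * cos (b - a) \<or> rk \<le> rj * cos (b - a))"
  shows "\<not> (rj \<le> ri * cos b \<or> ri \<le> rj * cos b)"
proof -
  define c1 where "c1 = cos a"
  define c2 where "c2 = cos (b - a)"
  have cb: "cos b = c1 * c2 - sin a * sin (b - a)"
    unfolding c1_def c2_def using cos_add[of a "b - a"] by simp
  have s1: "sin a \<ge> 0" using ab by (intro sin_ge_zero) auto
  have s2: "sin (b - a) \<ge> 0" using ab by (intro sin_ge_zero) auto
  have cbl: "cos b \<le> c1 * c2" using cb s1 s2 by (simp add: mult_nonneg_nonneg)
  have h1: "rk > ri * c1" "ri > rk * c1" "rj > rk * c2" "rk > rj * c2"
    using n1 n2 unfolding c1_def c2_def by auto
  have notboth: "c1 \<ge> 0 \<or> c2 \<ge> 0"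
  proof (rule ccontr)
    assume "\<not> ?thesis"
    hence "cos a < 0" "cos (b - a) < 0" unfolding c1_def c2_def by auto
    hence "\<not> a \<le> pi/2" "\<not> b - a \<le> pi/2"
      using ab cos_ge_zero[of a] cos_ge_zero[of "b-a"] by auto
    thus False using ab by linarith
  qed
  have A: "rj > ri * cos b"
  proof (cases "c2 \<ge> 0")
    case True
    have "rk * c2 \<ge> ri * c1 * c2" using h1(1) True
      by (metis less_eq_real_def mult_right_mono)
    moreover have "ri * c1 * c2 \<ge> ri * cos b" using cbl pos
      by (simp add: mult.assoc)
    ultimately show ?thesis using h1(3) by linarith
  next
    case False
    hence "c1 \<ge> 0" using notboth by auto
    hence "c1 * c2 \<le> 0" using False by (simp add: mult_nonneg_nonpos)
    hence "cos b \<le> 0" using cbl by linarith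
    thus ?thesis using pos by (smt (verit) mult_pos_neg mult_nonneg_nonpos)
  qed
  have B: "ri > rj * cos b"
  proof (cases "c1 \<ge> 0")
    case True
    have "rk * c1 \<ge> rj * c2 * c1" using h1(4) True
      by (metis less_eq_real_def mult_right_mono)
    moreover have "rj * c2 * c1 \<ge> rj * cos b" using cbl pos
      by (simp add: mult.assoc mult.commute)
    ultimately show ?thesis using h1(2) by linarith
  next
    case False
    hence "c2 \<ge> 0" using notboth by auto
    hence "c1 * c2 \<le> 0" using False by (simp add: mult_nonpos_nonneg)
    hence "cos b \<le> 0" using cbl by linarith
    thus ?thesis using pos by (smt (verit) mult_pos_neg mult_nonneg_nonpos)
  qed
  show ?thesis using A B by auto
qed

lemma chain:
  fixes r phi :: "nat \<Rightarrow> real"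
  assumes "i < j" "\<And>k. i \<le> k \<Longrightarrow> k \<le> j \<Longrightarrow> r k > 0"
    and "\<And>k m. i \<le> k \<Longrightarrow> k \<le> m \<Longrightarrow> m \<le> j \<Longrightarrow> phi k \<le> phi m"
    and "phi j - phi i < pi"
    and "r j \<le> r i * cos (phi j - phi i) \<or> r i \<le> r j * cos (phi j - phi i)"
  shows "\<exists>k. i \<le> k \<and> k + 1 \<le> j \<and>
    (r (k+1) \<le> r k * cos (phi (k+1) - phi k) \<or> r k \<le> r (k+1) * cos (phi (k+1) - phi k))"
  using assms
proof (induction "j - i" arbitrary: i)
  case 0
  then show ?case by simp
next
  case (Suc d)
  show ?case
  proof (cases "j = i + 1")
    case True
    then show ?thesis using Suc.prems by auto
  next
    case False
    hence ij: "i + 1 < j" using Suc.prems by simp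
    show ?thesis
    proof (cases "r (i+1) \<le> r i * cos (phi (i+1) - phi i) \<or> r i \<le> r (i+1) * cos (phi (i+1) - phi i)")
      case True
      then show ?thesis using ij by auto
    next
      case nc: False
      have C2: "r j \<le> r (i+1) * cos (phi j - phi (i+1)) \<or> r (i+1) \<le> r j * cos (phi j - phi (i+1))"
      proof (rule ccontr)
        assume nc2: "\<not> ?thesis"
        have m1: "phi i \<le> phi (i+1)" "phi (i+1) \<le> phi j" using Suc.prems(3) ij by auto
        have "\<not> (r j \<le> r i * cos (phi j - phi i) \<or> r i \<le> r j * cos (phi j - phi i))"
          apply (rule step[where rk = "r (i+1)" and a = "phi (i+1) - phi i"])
          using Suc.prems ij m1 nc nc2 by auto
        thus False using Suc.prems by blast
      qed
      have "phi i \<le> phi (i+1)" using Suc.prems(3)[of i "i+1"] ij by auto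
      hence lt: "phi j - phi (Suc i) < pi" using Suc.prems(4) by simp
      have "\<exists>k. i + 1 \<le> k \<and> k + 1 \<le> j \<and>
        (r (k+1) \<le> r k * cos (phi (k+1) - phi k) \<or> r k \<le> r (k+1) * cos (phi (k+1) - phi k))"
        apply (rule Suc.hyps)
        using Suc.prems Suc.hyps(2) ij C2 lt by auto
      then show ?thesis by (meson Suc_leD add_leD1 le_trans)
    qed
  qed
qed

lemma cis_2pi_shift: "cis (x + 2 * pi) = cis x"
  by (simp add: cis.ctr)

lemma ccw_rep:
  assumes "z \<noteq> 0"
  shows "0 \<le> ccw_angle t z \<and> ccw_angle t z < 2 * pi \<and> z = rcis (cmod z) (t + ccw_angle t z)"
proof -
  define w where "w = z * cis (- t)"
  have wz: "z = w * cis t" unfolding w_def by (simp add: cis_mult)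
  have cw: "cmod w = cmod z" unfolding w_def by (simp add: norm_mult)
  have w: "w = rcis (cmod z) (Arg w)" using rcis_cmod_Arg[of w] cw by simp
  have "z = rcis (cmod z) (Arg w) * cis t" using wz w by simp
  also have "\<dots> = of_real (cmod z) * (cis (Arg w) * cis t)" by (simp add: rcis_def)
  also have "\<dots> = rcis (cmod z) (t + Arg w)" by (simp add: rcis_def cis_mult add.commute)
  finally have zr: "z = rcis (cmod z) (t + Arg w)" .
  have ca: "ccw_angle t z = (if Arg w < 0 then Arg w + 2 * pi else Arg w)"
    unfolding ccw_angle_def w_def by simp
  show ?thesis
  proof (cases "Arg w < 0")
    case True
    have "rcis (cmod z) (t + (Arg w + 2 * pi)) = rcis (cmod z) (t + Arg w)"
      unfolding rcis_def using cis_2pi_shift[of "t + Arg w"] by (simp add: add.assoc)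
    then show ?thesis using ca True zr Arg_bounded[of w] by auto
  next
    case False
    then show ?thesis using ca zr Arg_bounded[of w] by auto
  qed
qed

lemma ccw_uniq:
  assumes "r > 0" "0 \<le> psi" "psi < 2 * pi" "z = rcis r (t + psi)"
  shows "ccw_angle t z = psi"
proof -
  have w: "z * cis (- t) = rcis r psi" using assms(4)
    by (simp add: rcis_def cis_mult mult.assoc)
  show ?thesis
  proof (cases "psi \<le> pi")
    case True
    have "Arg (rcis r psi) = psi" using True assms by (intro Arg_rcis) auto
    then show ?thesis unfolding ccw_angle_def w using assms by simp
  next
    case False
    have e: "rcis r psi = rcis r (psi - 2 * pi)"
      unfolding rcis_def using cis_2pi_shift[of "psi - 2*pi"] by simp
    have "Arg (rcis r psi) = psi - 2 * pi" unfolding e using False assms by (intro Arg_rcis) auto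
    then show ?thesis unfolding ccw_angle_def w using assms False by simp
  qed
qed

lemma alg_id: fixes rb cy ra cx sy sx :: real
  shows "(rb*cy - ra*cx/2)^2 + (rb * sy - ra * sx/2)^2 = rb^2 * (sy^2+cy^2) + (ra/2)^2*(sx^2+cx^2) - ra*rb*(cy*cx+sy * sx)"
  by (simp add: power2_eq_square algebra_simps)

lemma disk_char:
  assumes "ra > 0" "rb > 0"
  shows "u + rcis rb y \<in> diam_disk u (u + rcis ra x) \<longleftrightarrow> rb \<le> ra * cos (y - x)"
proof -
  have "u + rcis rb y \<in> diam_disk u (u + rcis ra x) \<longleftrightarrow>
        cmod (rcis rb y - rcis ra x / 2) \<le> ra / 2"
  proof -
    have 1: "(u + (u + rcis ra x)) / 2 - (u + rcis rb y) = - (rcis rb y - rcis ra x / 2)"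
      by (simp add: field_simps)
    have 2: "u - (u + rcis ra x) = - rcis ra x" by simp
    show ?thesis unfolding diam_disk_def mem_cball dist_norm 1 2 norm_minus_cancel
      using assms by simp
  qed
  also have "\<dots> \<longleftrightarrow> (cmod (rcis rb y - rcis ra x / 2))^2 \<le> (ra/2)^2"
    using assms by (simp add: abs_le_square_iff[symmetric] power2_le_iff_abs_le)
  also have "(cmod (rcis rb y - rcis ra x / 2))^2 =
      (rb * cos y - ra * cos x / 2)^2 + (rb * sin y - ra * sin x / 2)^2"
    by (simp add: cmod_power2 rcis_def cis.ctr)
  also have "\<dots> = rb^2 + (ra/2)^2 - ra * rb * (cos y * cos x + sin y * sin x)"
    using alg_id[of rb "cos y" ra "cos x" "sin y" "sin x"] by simp
  also have "\<dots> = rb^2 + (ra/2)^2 - ra * rb * cos (y - x)"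
    by (simp add: cos_diff)
  finally have "u + rcis rb y \<in> diam_disk u (u + rcis ra x) \<longleftrightarrow> rb * rb \<le> rb * (ra * cos (y - x))"
    by (simp add: power2_eq_square algebra_simps)
  also have "\<dots> \<longleftrightarrow> rb \<le> ra * cos (y - x)" using assms by simp
  finally show ?thesis .
qed

theorem lemma8:
  fixes V :: "complex set" and E :: "(complex \<times> complex) set"
    and u :: complex and vs :: "complex list" and i j :: nat
  assumes "geometric_graph V E"
    and "u \<in> V"
    and "ccw_neighbor_list E u vs"
    and "j < length vs" and "i + 2 \<le> j"
    and "conflict u (vs ! i) (vs ! j)"
    and "ccw_angle (Arg (vs ! i - u)) (vs ! j - u) < pi"
  shows "\<exists>k. i \<le> k \<and> k + 1 \<le> j \<and> conflict u (vs ! k) (vs ! (k + 1))"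
proof -
  obtain theta where srt: "sorted (map (\<lambda>v. ccw_angle theta (v - u)) vs)"
    and setvs: "set vs = neighbors E u"
    using assms(3) unfolding ccw_neighbor_list_def by blast
  define r where "r k = cmod (vs ! k - u)" for k
  define phi where "phi k = ccw_angle theta (vs ! k - u)" for k
  have nz: "vs ! k - u \<noteq> 0" if "k < length vs" for k
  proof -
    have "vs ! k \<in> neighbors E u" using that setvs nth_mem by metis
    then show ?thesis using assms(1) unfolding neighbors_def geometric_graph_def by auto
  qed
  have rpos: "r k > 0" if "k < length vs" for k using nz[OF that] unfolding r_def by simp
  have rep: "0 \<le> phi k \<and> phi k < 2 * pi \<and> vs ! k = u + rcis (r k) (theta + phi k)"
    if "k < length vs" for k
    using ccw_rep[OF nz[OF that], of theta] unfolding r_def phi_def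
    by (metis add.commute diff_add_cancel)
  have mono: "phi k \<le> phi m" if "k \<le> m" "m < length vs" for k m
    using sorted_nth_mono[OF srt, of k m] that unfolding phi_def by simp
  have cconv: "conflict u (vs ! k) (vs ! m) \<longleftrightarrow>
      (r m \<le> r k * cos (phi m - phi k) \<or> r k \<le> r m * cos (phi m - phi k))"
    if "k < length vs" "m < length vs" for k m
  proof -
    have e1: "vs ! m \<in> diam_disk u (vs ! k) \<longleftrightarrow> r m \<le> r k * cos ((theta + phi m) - (theta + phi k))"
      using disk_char[OF rpos[OF that(1)] rpos[OF that(2)], of u "theta + phi m" "theta + phi k"]
        rep[OF that(1)] rep[OF that(2)] by simp
    have e2: "vs ! k \<in> diam_disk u (vs ! m) \<longleftrightarrow> r k \<le> r m * cos ((theta + phi k) - (theta + phi m))"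
      using disk_char[OF rpos[OF that(2)] rpos[OF that(1)], of u "theta + phi k" "theta + phi m"]
        rep[OF that(1)] rep[OF that(2)] by simp
    have c: "cos (phi k - phi m) = cos (phi m - phi k)" by (metis cos_minus minus_diff_eq)
    show ?thesis unfolding conflict_def e1 e2 using c by simp
  qed
  have ilen: "i < length vs" using assms(4,5) by simp
  have sgni: "cis (Arg (vs ! i - u)) = cis (theta + phi i)"
  proof -
    have "vs ! i - u = rcis (r i) (theta + phi i)" using rep[OF ilen] by simp
    hence "sgn (vs ! i - u) = cis (theta + phi i)" using rpos[OF ilen]
      by (simp add: rcis_def sgn_mult sgn_of_real)
    thus ?thesis using cis_Arg[OF nz[OF ilen]] by simp
  qed
  have ang: "ccw_angle (Arg (vs ! i - u)) (vs ! j - u) = phi j - phi i"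
  proof (rule ccw_uniq[OF rpos[OF assms(4)]])
    show "0 \<le> phi j - phi i" using mono[of i j] assms(4,5) by simp
    show "phi j - phi i < 2 * pi" using rep[OF ilen] rep[OF assms(4)] by linarith
    have "rcis (r j) (Arg (vs ! i - u) + (phi j - phi i)) = r j * (cis (Arg (vs ! i - u)) * cis (phi j - phi i))"
      by (simp add: rcis_def cis_mult)
    also have "\<dots> = r j * cis (theta + phi j)" unfolding sgni cis_mult by simp
    also have "\<dots> = vs ! j - u" using rep[OF assms(4)] by (simp add: rcis_def)
    finally show "vs ! j - u = rcis (r j) (Arg (vs ! i - u) + (phi j - phi i))" by simp
  qed
  have "\<exists>k. i \<le> k \<and> k + 1 \<le> j \<and>
    (r (k+1) \<le> r k * cos (phi (k+1) - phi k) \<or> r k \<le> r (k+1) * cos (phi (k+1) - phi k))"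
  proof (rule chain)
    show "i < j" using assms(5) by simp
    show "\<And>k. i \<le> k \<Longrightarrow> k \<le> j \<Longrightarrow> r k > 0" using rpos assms(4) by simp
    show "\<And>k m. i \<le> k \<Longrightarrow> k \<le> m \<Longrightarrow> m \<le> j \<Longrightarrow> phi k \<le> phi m" using mono assms(4) by simp
    show "phi j - phi i < pi" using ang assms(7) by simp
    show "r j \<le> r i * cos (phi j - phi i) \<or> r i \<le> r j * cos (phi j - phi i)"
      using cconv[OF ilen assms(4)] assms(6) by simp
  qed
  then obtain k where k: "i \<le> k" "k + 1 \<le> j"
    "r (k+1) \<le> r k * cos (phi (k+1) - phi k) \<or> r k \<le> r (k+1) * cos (phi (k+1) - phi k)"
    by blast
  have "conflict u (vs ! k) (vs ! (k + 1))" using cconv[of k "k+1"] k assms(4) by simp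
  thus ?thesis using k by blast
qed

end
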